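(* Let $T\in\mathrm{Aut}(X,\mu)$, let $P\in\mathrm{Aut}(X,\mu)$ be periodic with fundamental domain $D$, and set $U=T_DP$. Then: (i) $U_D=T_D$; (ii) for almost every $x\in D$, the first return time of $U$ to $D$ at $x$, $\min\{n\ge1:U^n(x)\in D\}$, equals the cardinality of the $P$-orbit of $x$; (iii) if moreover $P\in[T]$, then $T$ and $U$ have the same orbits.
   Context: $(X,\mu)$ standard atomless probability space; $\mathrm{Aut}(X,\mu)$ measure-preserving transformations modulo null sets. $P$ is periodic if almost every $P$-orbit is finite; a fundamental domain of $P$ is a measurable set meeting almost every $P$-orbit in exactly one point. $[T]$ is the set of $V\in\mathrm{Aut}(X,\mu)$ with $V(x)$ in the $T$-orbit of $x$ for a.e. $x$. For $V\in\mathrm{Aut}(X,\mu)$ and measurable $B$, the first return map $V_B$ is $V_B(x)=V^{n(x)}(x)$ with $n(x)=\min\{n\ge1:V^n(x)\in B\}$ for $x\in B$, and $V_B(x)=x$ for $x\notin B$. Having the same orbits means the orbits of a.e. point coincide. *)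

theory Defs
  imports "HOL-Probability.Probability"
begin

definition atomless :: "'a measure \<Rightarrow> bool" where
  "atomless M \<longleftrightarrow> (\<forall>A\<in>sets M. measure M A > 0 \<longrightarrow>
     (\<exists>B\<in>sets M. B \<subseteq> A \<and> 0 < measure M B \<and> measure M B < measure M A))"

text \<open>Representatives of elements of Aut(X,mu): bimeasurable measure-preserving
  bijections of the space (elements of Aut are considered modulo null sets,
  so all statements about them are made almost everywhere).\<close>
definition aut :: "'a measure \<Rightarrow> ('a \<Rightarrow> 'a) \<Rightarrow> bool" where
  "aut M T \<longleftrightarrow> bij_betw T (space M) (space M) \<and> T \<in> measurable M M \<and>
     the_inv_into (space M) T \<in> measurable M M \<and> distr M M T = M"

definition aut_orbit :: "'a measure \<Rightarrow> ('a \<Rightarrow> 'a) \<Rightarrow> 'a \<Rightarrow> 'a set" where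
  "aut_orbit M T x = {y. \<exists>n. y = (T ^^ n) x} \<union> {y. \<exists>n. y = (the_inv_into (space M) T ^^ n) x}"

definition periodic :: "'a measure \<Rightarrow> ('a \<Rightarrow> 'a) \<Rightarrow> bool" where
  "periodic M P \<longleftrightarrow> (AE x in M. finite (aut_orbit M P x))"

definition fundamental_domain :: "'a measure \<Rightarrow> ('a \<Rightarrow> 'a) \<Rightarrow> 'a set \<Rightarrow> bool" where
  "fundamental_domain M P D \<longleftrightarrow> D \<in> sets M \<and> (AE x in M. card (aut_orbit M P x \<inter> D) = 1)"

definition full_group :: "'a measure \<Rightarrow> ('a \<Rightarrow> 'a) \<Rightarrow> ('a \<Rightarrow> 'a) set" where
  "full_group M T = {V. aut M V \<and> (AE x in M. V x \<in> aut_orbit M T x)}"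

text \<open>First return time and first return map (identity off B, and on the null
  set of points of B that never return).\<close>
definition return_time :: "('a \<Rightarrow> 'a) \<Rightarrow> 'a set \<Rightarrow> 'a \<Rightarrow> nat" where
  "return_time V B x = (LEAST n. n \<ge> 1 \<and> (V ^^ n) x \<in> B)"

definition first_return :: "('a \<Rightarrow> 'a) \<Rightarrow> 'a set \<Rightarrow> 'a \<Rightarrow> 'a" where
  "first_return V B x =
     (if x \<in> B \<and> (\<exists>n\<ge>1. (V ^^ n) x \<in> B) then (V ^^ return_time V B x) x else x)"

definition same_orbits :: "'a measure \<Rightarrow> ('a \<Rightarrow> 'a) \<Rightarrow> ('a \<Rightarrow> 'a) \<Rightarrow> bool" where
  "same_orbits M T U \<longleftrightarrow> (AE x in M. aut_orbit M T x = aut_orbit M U x)"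

end

theory Submission
  imports Defs
begin


definition orb :: "('a \<Rightarrow> 'a) \<Rightarrow> ('a \<Rightarrow> 'a) \<Rightarrow> 'a \<Rightarrow> 'a set" where
  "orb f g x = {y. \<exists>n. y = (f ^^ n) x} \<union> {y. \<exists>n. y = (g ^^ n) x}"

lemma aut_orbit_orb: "aut_orbit M f x = orb f (the_inv_into (space M) f) x"
  by (simp add: aut_orbit_def orb_def)

lemma orb_min:
  assumes "x \<in> S" "\<And>y. y \<in> S \<Longrightarrow> f y \<in> S" "\<And>y. y \<in> S \<Longrightarrow> g y \<in> S"
  shows "orb f g x \<subseteq> S"
proof -
  have "(f ^^ n) x \<in> S" for n by (induction n) (auto simp: assms)
  moreover have "(g ^^ n) x \<in> S" for n by (induction n) (auto simp: assms)
  ultimately show ?thesis by (auto simp: orb_def)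
qed

lemma orb_self: "x \<in> orb f g x"
  unfolding orb_def by (auto intro: exI[where x=0])

lemma orb_fpow: "(f ^^ n) x \<in> orb f g x"
  unfolding orb_def by blast

lemma orb_gpow: "(g ^^ n) x \<in> orb f g x"
  unfolding orb_def by blast

locale inv_on =
  fixes G :: "'a set" and f g :: "'a \<Rightarrow> 'a"
  assumes fG: "x \<in> G \<Longrightarrow> f x \<in> G" and gG: "x \<in> G \<Longrightarrow> g x \<in> G"
    and gf: "x \<in> G \<Longrightarrow> g (f x) = x" and fg: "x \<in> G \<Longrightarrow> f (g x) = x"
begin

lemma fpow_G: "x \<in> G \<Longrightarrow> (f ^^ n) x \<in> G"
  by (induction n) (auto simp: fG)

lemma gpow_G: "x \<in> G \<Longrightarrow> (g ^^ n) x \<in> G"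
  by (induction n) (auto simp: gG)

lemma orb_G: "x \<in> G \<Longrightarrow> orb f g x \<subseteq> G"
  using orb_min[of x G f g] fG gG by blast

lemma orb_f:
  assumes "x \<in> G" "y \<in> orb f g x"
  shows "f y \<in> orb f g x"
proof -
  from assms(2) consider n where "y = (f ^^ n) x" | n where "y = (g ^^ n) x"
    by (auto simp: orb_def)
  then show ?thesis
  proof cases
    case 1
    then have "f y = (f ^^ Suc n) x" by simp
    then show ?thesis using orb_fpow by metis
  next
    case 2
    show ?thesis
    proof (cases n)
      case 0
      then have "f y = (f ^^ 1) x" using 2 by simp
      then show ?thesis using orb_fpow by metis
    next
      case (Suc m)
      then have "f y = (g ^^ m) x" using 2 fg[OF gpow_G[OF assms(1), of m]] by simp
      then show ?thesis using orb_gpow by metis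
    qed
  qed
qed

lemma orb_g:
  assumes "x \<in> G" "y \<in> orb f g x"
  shows "g y \<in> orb f g x"
proof -
  from assms(2) consider n where "y = (f ^^ n) x" | n where "y = (g ^^ n) x"
    by (auto simp: orb_def)
  then show ?thesis
  proof cases
    case 2
    then have "g y = (g ^^ Suc n) x" by simp
    then show ?thesis using orb_gpow by metis
  next
    case 1
    show ?thesis
    proof (cases n)
      case 0
      then have "g y = (g ^^ 1) x" using 1 by simp
      then show ?thesis using orb_gpow by metis
    next
      case (Suc m)
      then have "g y = (f ^^ m) x" using 1 gf[OF fpow_G[OF assms(1), of m]] by simp
      then show ?thesis using orb_fpow by metis
    qed
  qed
qed

lemma orb_trans:
  assumes "x \<in> G" "y \<in> orb f g x"
  shows "orb f g y \<subseteq> orb f g x"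
  using orb_min[of y "orb f g x" f g] orb_f[OF assms(1)] orb_g[OF assms(1)] assms(2) by blast

lemma gf_pow: "x \<in> G \<Longrightarrow> (g ^^ n) ((f ^^ n) x) = x"
proof (induction n)
  case 0 then show ?case by simp
next
  case (Suc n)
  have e1: "(g ^^ Suc n) z = (g ^^ n) (g z)" for z by (simp only: funpow_Suc_right comp_apply)
  have "(g ^^ Suc n) ((f ^^ Suc n) x) = (g ^^ n) (g (f ((f ^^ n) x)))"
    by (subst e1) simp
  also have "\<dots> = (g ^^ n) ((f ^^ n) x)" using gf[OF fpow_G[OF Suc.prems]] by simp
  finally show ?case using Suc by simp
qed

lemma fg_pow: "x \<in> G \<Longrightarrow> (f ^^ n) ((g ^^ n) x) = x"
proof (induction n)
  case 0 then show ?case by simp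
next
  case (Suc n)
  have e1: "(f ^^ Suc n) z = (f ^^ n) (f z)" for z by (simp only: funpow_Suc_right comp_apply)
  have "(f ^^ Suc n) ((g ^^ Suc n) x) = (f ^^ n) (f (g ((g ^^ n) x)))"
    by (subst e1) simp
  also have "\<dots> = (f ^^ n) ((g ^^ n) x)" using fg[OF gpow_G[OF Suc.prems]] by simp
  finally show ?case using Suc by simp
qed

lemma orb_sym:
  assumes "x \<in> G" "y \<in> orb f g x"
  shows "x \<in> orb f g y"
proof -
  from assms(2) consider n where "y = (f ^^ n) x" | n where "y = (g ^^ n) x"
    by (auto simp: orb_def)
  then show ?thesis
  proof cases
    case 1 then have "x = (g ^^ n) y" using gf_pow[OF assms(1)] by simp
    then show ?thesis using orb_gpow by metis
  next
    case 2 then have "x = (f ^^ n) y" using fg_pow[OF assms(1)] by simp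
    then show ?thesis using orb_fpow by metis
  qed
qed

lemma fpow_inj:
  assumes "x \<in> G" "y \<in> G" "(f ^^ n) x = (f ^^ n) y" shows "x = y"
  using gf_pow[OF assms(1), of n] gf_pow[OF assms(2), of n] assms(3) by metis

lemma cycle:
  assumes "x \<in> G" "finite (orb f g x)"
  defines "k \<equiv> card (orb f g x)"
  shows "0 < k \<and> (f ^^ k) x = x \<and> orb f g x = (\<lambda>j. (f ^^ j) x) ` {..<k}
         \<and> inj_on (\<lambda>j. (f ^^ j) x) {..<k}"
proof -
  let ?h = "\<lambda>j. (f ^^ j) x"
  have "\<not> inj_on ?h {..k}"
  proof
    assume "inj_on ?h {..k}"
    hence "card (?h ` {..k}) = Suc k" by (simp add: card_image)
    moreover have "?h ` {..k} \<subseteq> orb f g x" using orb_fpow[where f=f and x=x and g=g] by blast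
    ultimately have "Suc k \<le> k" using card_mono[OF assms(2)] unfolding k_def by metis
    thus False by simp
  qed
  then obtain i j where ij: "i \<le> k" "j \<le> k" "i \<noteq> j" "?h i = ?h j"
    unfolding inj_on_def by auto
  have ex: "\<exists>p. 0 < p \<and> p \<le> k \<and> (f ^^ p) x = x"
  proof -
    have *: "(f ^^ (b - a)) x = x" if "a < b" "?h a = ?h b" for a b
    proof -
      have "(f ^^ (a + (b - a))) x = (f ^^ a) ((f ^^ (b - a)) x)"
        by (simp only: funpow_add comp_apply)
      hence "(f ^^ a) ((f ^^ (b - a)) x) = (f ^^ b) x"
        using \<open>a < b\<close> by simp
      hence "(f ^^ a) ((f ^^ (b - a)) x) = (f ^^ a) x" using that(2) by simp
      thus ?thesis using fpow_inj[OF fpow_G[OF assms(1)] assms(1)] by blast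
    qed
    show ?thesis
    proof (cases "i < j")
      case True then show ?thesis using *[of i j] ij by (intro exI[of _ "j - i"]) auto
    next
      case False then have "j < i" using ij by simp
      then show ?thesis using *[of j i] ij by (intro exI[of _ "i - j"]) auto
    qed
  qed
  define p where "p = (LEAST p. 0 < p \<and> (f ^^ p) x = x)"
  have p: "0 < p" "(f ^^ p) x = x" using LeastI_ex[of "\<lambda>p. 0 < p \<and> (f ^^ p) x = x"] ex
    unfolding p_def by blast+
  have pmin: "\<not> (0 < q \<and> (f ^^ q) x = x)" if "q < p" for q
    using not_less_Least[of q "\<lambda>p. 0 < p \<and> (f ^^ p) x = x"] that unfolding p_def by blast
  define S where "S = ?h ` {..<p}"
  have S1: "?h m \<in> S" if "m \<le> p" for m
  proof (cases "m = p")
    case True then have "?h m = ?h 0" using p by simp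
    have "?h 0 \<in> S" using p(1) unfolding S_def by blast
    then show ?thesis using \<open>?h m = ?h 0\<close> by simp
  next
    case False then show ?thesis using that unfolding S_def by auto
  qed
  have "orb f g x \<subseteq> S"
  proof (rule orb_min)
    show "x \<in> S" using S1[of 0] by simp
    fix y assume "y \<in> S"
    then obtain m where m: "m < p" "y = ?h m" unfolding S_def by auto
    show "f y \<in> S" using S1[of "Suc m"] m by simp
    show "g y \<in> S"
    proof (cases m)
      case 0
      obtain q where q: "p = Suc q" using p(1) by (cases p) auto
      have "f (?h q) = x" using p(2) q by simp
      hence "g x = ?h q" using gf[OF fpow_G[OF assms(1), of q]] by metis
      then show ?thesis using 0 m S1[of q] q by simp
    next
      case (Suc q)
      have "g y = ?h q" using m Suc gf[OF fpow_G[OF assms(1), of q]] by simp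
      then show ?thesis using S1[of q] m Suc by simp
    qed
  qed
  moreover have "S \<subseteq> orb f g x" unfolding S_def using orb_fpow[where f=f and x=x and g=g] by blast
  ultimately have eq: "orb f g x = S" by blast
  have inj: "inj_on ?h {..<p}"
  proof (rule inj_onI)
    fix a b assume ab: "a \<in> {..<p}" "b \<in> {..<p}" "?h a = ?h b"
    have *: "False" if "a' < b'" "b' < p" "?h a' = ?h b'" for a' b'
    proof -
      have "(f ^^ (a' + (b' - a'))) x = (f ^^ a') ((f ^^ (b' - a')) x)"
        by (simp only: funpow_add comp_apply)
      hence "(f ^^ a') ((f ^^ (b' - a')) x) = (f ^^ b') x"
        using \<open>a' < b'\<close> by simp
      hence "(f ^^ a') ((f ^^ (b' - a')) x) = (f ^^ a') x" using that(3) by simp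
      hence "(f ^^ (b' - a')) x = x" using fpow_inj[OF fpow_G[OF assms(1)] assms(1)] by blast
      moreover have "b' - a' < p" using that by linarith
      ultimately show False using pmin[of "b' - a'"] that by simp
    qed
    show "a = b" using *[of a b] *[of b a] ab by (metis linorder_neqE_nat lessThan_iff)
  qed
  have "k = p" unfolding k_def eq S_def using card_image[OF inj] by simp
  thus ?thesis using p eq inj S_def by simp
qed

end




definition mpres :: "'a measure \<Rightarrow> ('a \<Rightarrow> 'a) \<Rightarrow> bool" where
  "mpres M f \<longleftrightarrow> f \<in> measurable M M \<and> (\<forall>A\<in>sets M. emeasure M (f -` A \<inter> space M) = emeasure M A)"

lemma mpres_AE:
  assumes "mpres M f" "AE x in M. Q x"
  shows "AE x in M. Q (f x)"
proof -
  from assms(2) obtain N where N: "{x \<in> space M. \<not> Q x} \<subseteq> N" "emeasure M N = 0" "N \<in> sets M"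
    by (rule AE_E)
  have f: "f \<in> measurable M M" using assms(1) by (simp add: mpres_def)
  show ?thesis
  proof (rule AE_I[where N="f -` N \<inter> space M"])
    show "{x \<in> space M. \<not> Q (f x)} \<subseteq> f -` N \<inter> space M"
      using N(1) measurable_space[OF f] by auto
    show "emeasure M (f -` N \<inter> space M) = 0" using assms(1) N by (simp add: mpres_def)
    show "f -` N \<inter> space M \<in> sets M" using measurable_sets[OF f N(3)] .
  qed
qed

lemma mpres_pow:
  assumes "mpres M f" "space M = UNIV"
  shows "mpres M (f ^^ n)"
proof (induction n)
  case 0 then show ?case using assms(2) by (simp add: mpres_def)
next
  case (Suc n)
  have f: "f \<in> measurable M M" using assms(1) by (simp add: mpres_def)
  have fn: "(f ^^ n) \<in> measurable M M" using Suc by (simp add: mpres_def)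
  have "(f ^^ Suc n) \<in> measurable M M" using measurable_comp[OF fn f] by simp
  moreover have "emeasure M ((f ^^ Suc n) -` A \<inter> space M) = emeasure M A" if A: "A \<in> sets M" for A
  proof -
    have "(f ^^ Suc n) -` A = f -` ((f ^^ n) -` A)" by (auto simp: funpow_Suc_right simp del: funpow.simps)
    moreover have "(f ^^ n) -` A \<in> sets M" using measurable_sets[OF fn A] assms(2) by simp
    ultimately show ?thesis using assms Suc A by (simp add: mpres_def)
  qed
  ultimately show ?case unfolding mpres_def by blast
qed

lemma mpres_AE_pow:
  assumes "mpres M f" "space M = UNIV" "AE x in M. Q x"
  shows "AE x in M. \<forall>n. Q ((f ^^ n) x)"
  using mpres_AE[OF mpres_pow[OF assms(1,2)] assms(3)] by (simp add: AE_all_countable)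

lemma poincare:
  assumes "mpres M f" "space M = UNIV" "prob_space M" "A \<in> sets M"
  shows "AE x in M. x \<in> A \<longrightarrow> (\<exists>n\<ge>1. (f ^^ n) x \<in> A)"
proof -
  interpret prob_space M by fact
  define W where "W = A \<inter> (\<Inter>n. (f ^^ Suc n) -` (UNIV - A))"
  have fm: "(f ^^ n) \<in> measurable M M" for n using mpres_pow[OF assms(1,2)] by (simp add: mpres_def)
  have pm: "(f ^^ Suc n) -` (UNIV - A) \<in> sets M" for n
    using measurable_sets[OF fm[of "Suc n"], of "UNIV - A"] assms(2,4) sets.compl_sets[of A M] by simp
  have Wm: "W \<in> sets M"
    unfolding W_def using assms(4) pm
    by (intro sets.Int sets.countable_INT') auto
  define V where "V i = (f ^^ i) -` W" for i
  have Vm: "V i \<in> sets M" for i using measurable_sets[OF fm Wm] assms(2) by (simp add: V_def)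
  have Vmeas: "measure M (V i) = measure M W" for i
    using mpres_pow[OF assms(1,2), of i] Wm assms(2) by (simp add: mpres_def V_def measure_def)
  have disj: "disjoint_family V"
  unfolding disjoint_family_on_def
  proof (intro ballI impI)
    fix i j :: nat assume "i \<noteq> j"
    show "V i \<inter> V j = {}"
    proof (rule ccontr)
      assume "V i \<inter> V j \<noteq> {}"
      then obtain x where x: "(f ^^ i) x \<in> W" "(f ^^ j) x \<in> W" by (auto simp: V_def)
      have key: "False" if "a < b" "(f ^^ a) x \<in> W" "(f ^^ b) x \<in> W" for a b
      proof -
        define m where "m = b - a - 1"
        have b: "b = Suc m + a" using \<open>a < b\<close> unfolding m_def by simp
        have "(f ^^ b) x = (f ^^ Suc m) ((f ^^ a) x)" by (simp only: b funpow_add comp_apply)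
        thus False using that(2,3) unfolding W_def by auto
      qed
      show False
      proof (cases "i < j")
        case True then show ?thesis using key[of i j] x by blast
      next
        case False then have "j < i" using \<open>i \<noteq> j\<close> by simp
        then show ?thesis using key[of j i] x by blast
      qed
    qed
  qed
  have "measure M W = 0"
  proof (rule ccontr)
    assume "measure M W \<noteq> 0"
    hence pos: "measure M W > 0" by (simp add: measure_nonneg order_le_neq_trans)
    obtain N :: nat where N: "1 / measure M W < N" using reals_Archimedean2 by blast
    have "measure M (\<Union>i\<in>{..<N}. V i) = (\<Sum>i\<in>{..<N}. measure M (V i))"
      using Vm disj by (intro finite_measure_finite_Union) (auto simp: disjoint_family_on_def)
    also have "\<dots> = N * measure M W" by (simp add: Vmeas)
    finally have eq: "measure M (\<Union>i\<in>{..<N}. V i) = N * measure M W" .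
    have "measure M (\<Union>i\<in>{..<N}. V i) \<le> 1" by (rule prob_le_1)
    hence "N * measure M W \<le> 1" using eq by simp
    moreover have "1 < N * measure M W" using N pos by (simp add: field_simps)
    ultimately show False by simp
  qed
  hence "emeasure M W = 0" by (simp add: emeasure_eq_measure)
  show ?thesis
  proof (rule AE_I[OF _ \<open>emeasure M W = 0\<close> Wm])
    show "{x \<in> space M. \<not> (x \<in> A \<longrightarrow> (\<exists>n\<ge>1. (f ^^ n) x \<in> A))} \<subseteq> W"
    proof
      fix x assume "x \<in> {x \<in> space M. \<not> (x \<in> A \<longrightarrow> (\<exists>n\<ge>1. (f ^^ n) x \<in> A))}"
      hence xA: "x \<in> A" and nr: "\<And>n. n \<ge> 1 \<Longrightarrow> (f ^^ n) x \<notin> A" by auto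
      have "(f ^^ Suc n) x \<notin> A" for n using nr[of "Suc n"] by simp
      thus "x \<in> W" unfolding W_def using xA by blast
    qed
  qed
qed




locale setting = T: inv_on UNIV T Ti + P: inv_on UNIV P Pi
  for T Ti P Pi :: "'a \<Rightarrow> 'a" + fixes D :: "'a set"
begin

abbreviation "TD \<equiv> first_return T D"
abbreviation "U \<equiv> first_return T D \<circ> P"

lemma TD_notD: "x \<notin> D \<Longrightarrow> TD x = x"
  by (simp add: first_return_def)

lemma return_time_props:
  assumes "x \<in> B" "n \<ge> 1" "(V ^^ n) x \<in> B"
  shows "1 \<le> return_time V B x" "(V ^^ return_time V B x) x \<in> B"
    "return_time V B x \<le> n"
    "\<And>j. 1 \<le> j \<Longrightarrow> j < return_time V B x \<Longrightarrow> (V ^^ j) x \<notin> B"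
proof -
  have ex: "\<exists>m. m \<ge> 1 \<and> (V ^^ m) x \<in> B" using assms by blast
  show "1 \<le> return_time V B x" "(V ^^ return_time V B x) x \<in> B"
    using LeastI_ex[OF ex] unfolding return_time_def by blast+
  show "return_time V B x \<le> n" using assms unfolding return_time_def by (intro Least_le) simp
  show "\<And>j. 1 \<le> j \<Longrightarrow> j < return_time V B x \<Longrightarrow> (V ^^ j) x \<notin> B"
    unfolding return_time_def using not_less_Least by blast
qed

lemma first_return_D: "x \<in> B \<Longrightarrow> first_return V B x \<in> B"
  unfolding first_return_def using return_time_props(2) by auto

lemma TD_orb: "TD x \<in> orb T Ti x"
  unfolding first_return_def using orb_self orb_fpow by (auto simp del: funpow.simps)

definition good0 where "good0 x \<longleftrightarrow> finite (orb P Pi x) \<and> card (orb P Pi x \<inter> D) = 1"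

lemma good0_single: "good0 d \<Longrightarrow> d \<in> D \<Longrightarrow> orb P Pi d \<inter> D = {d}"
  unfolding good0_def using orb_self[of d P Pi] by (metis IntI card_1_singletonE singletonD)

lemma cyc:
  assumes "d \<in> D" "good0 d"
  defines "k \<equiv> card (orb P Pi d)"
  shows "0 < k" "(P ^^ k) d = d" "orb P Pi d = (\<lambda>j. (P ^^ j) d) ` {..<k}"
    "\<And>j. 1 \<le> j \<Longrightarrow> j < k \<Longrightarrow> (P ^^ j) d \<notin> D"
    "\<And>j. j < k \<Longrightarrow> (U ^^ j) d = (P ^^ j) d"
    "(U ^^ k) d = TD d"
proof -
  have c: "0 < k \<and> (P ^^ k) d = d \<and> orb P Pi d = (\<lambda>j. (P ^^ j) d) ` {..<k}
         \<and> inj_on (\<lambda>j. (P ^^ j) d) {..<k}"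
    unfolding k_def using P.cycle[of d] assms(2) unfolding good0_def by simp
  thus k: "0 < k" "(P ^^ k) d = d" "orb P Pi d = (\<lambda>j. (P ^^ j) d) ` {..<k}" by auto
  show nD: "(P ^^ j) d \<notin> D" if "1 \<le> j" "j < k" for j
  proof
    assume "(P ^^ j) d \<in> D"
    hence "(P ^^ j) d = d" using good0_single[OF assms(2,1)] orb_fpow[where f=P and g=Pi] by blast
    hence "(P ^^ j) d = (P ^^ 0) d" by simp
    hence "j = 0" using c that unfolding inj_on_def by blast
    thus False using that by simp
  qed
  show U: "(U ^^ j) d = (P ^^ j) d" if "j < k" for j
    using that
  proof (induction j)
    case 0 then show ?case by simp
  next
    case (Suc j)
    have IH: "(U ^^ j) d = (P ^^ j) d" using Suc.IH[OF Suc_lessD[OF Suc.prems]] .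
    have "(U ^^ Suc j) d = TD (P ((U ^^ j) d))" by (simp only: funpow.simps comp_apply)
    also have "\<dots> = TD (P ((P ^^ j) d))" by (simp only: IH)
    also have "\<dots> = (P ^^ Suc j) d" using TD_notD nD[of "Suc j"] Suc.prems by simp
    finally show ?case .
  qed
  obtain m where m: "k = Suc m" using k(1) by (cases k) auto
  have "(U ^^ k) d = TD (P ((U ^^ m) d))" using m by simp
  also have "\<dots> = TD ((P ^^ k) d)" using U[of m] m by simp
  finally show "(U ^^ k) d = TD d" using k(2) by simp
qed

lemma part12:
  assumes "good0 x"
  shows "first_return U D x = TD x"
    "x \<in> D \<Longrightarrow> (\<exists>n\<ge>1. (U ^^ n) x \<in> D) \<and> return_time U D x = card (orb P Pi x)"
proof -
  define k where "k = card (orb P Pi x)"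
  have rt: "(\<exists>n\<ge>1. (U ^^ n) x \<in> D) \<and> return_time U D x = k" if "x \<in> D"
  proof -
    note c = cyc[OF that assms, folded k_def]
    have kD: "(U ^^ k) x \<in> D" using c(6) first_return_D[OF that] by simp
    have k1: "k \<ge> 1" using c(1) by simp
    have "return_time U D x = k"
    proof (rule antisym)
      show "return_time U D x \<le> k" using return_time_props(3)[OF that k1 kD] .
      show "k \<le> return_time U D x"
      proof (rule ccontr)
        assume "\<not> k \<le> return_time U D x"
        hence "return_time U D x < k" by simp
        moreover have "1 \<le> return_time U D x" using return_time_props(1)[OF that k1 kD] .
        moreover have "(U ^^ return_time U D x) x \<in> D" using return_time_props(2)[OF that k1 kD] .
        ultimately show False using c(4,5) by metis
      qed
    qed
    thus ?thesis using kD k1 by blast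
  qed
  thus "x \<in> D \<Longrightarrow> (\<exists>n\<ge>1. (U ^^ n) x \<in> D) \<and> return_time U D x = card (orb P Pi x)"
    unfolding k_def by blast
  show "first_return U D x = TD x"
  proof (cases "x \<in> D")
    case True
    have "first_return U D x = (U ^^ k) x" using rt[OF True] True unfolding first_return_def by simp
    also have "\<dots> = TD x" using cyc(6)[OF True assms] k_def by simp
    finally show ?thesis .
  next
    case False then show ?thesis by (simp add: first_return_def)
  qed
qed


definition B0 where "B0 x \<longleftrightarrow> good0 x \<and> P x \<in> orb T Ti x \<and>
   (x \<in> D \<longrightarrow> (\<exists>n\<ge>1. (T ^^ n) x \<in> D)) \<and> (x \<in> D \<longrightarrow> (\<exists>n\<ge>1. (Ti ^^ n) x \<in> D))"

definition G where "G = {x. \<forall>y\<in>orb T Ti x. B0 y}"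

abbreviation "Ui \<equiv> the_inv_into UNIV U"

lemma G_orb: "x \<in> G \<Longrightarrow> y \<in> orb T Ti x \<Longrightarrow> y \<in> G"
  unfolding G_def using T.orb_trans[of x y] by blast

lemma G_B0: "x \<in> G \<Longrightarrow> B0 x"
  unfolding G_def using orb_self[of x T Ti] by blast

lemma G_T: "x \<in> G \<Longrightarrow> T x \<in> G"
  using G_orb orb_fpow[where f=T and g=Ti and n=1] by fastforce

lemma G_Ti: "x \<in> G \<Longrightarrow> Ti x \<in> G"
  using G_orb orb_gpow[where f=T and g=Ti and n=1] by fastforce

lemma G_P1: "x \<in> G \<Longrightarrow> P x \<in> orb T Ti x"
  using G_B0 unfolding B0_def by blast

lemma G_Pcyc: assumes "x \<in> G" shows "orb P Pi x \<subseteq> orb T Ti x"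
proof -
  have *: "(P ^^ n) x \<in> orb T Ti x" for n
  proof (induction n)
    case 0 then show ?case using orb_self by simp
  next
    case (Suc n)
    have "(P ^^ n) x \<in> G" using G_orb[OF assms Suc] .
    hence "P ((P ^^ n) x) \<in> orb T Ti ((P ^^ n) x)" by (rule G_P1)
    thus ?case using T.orb_trans[OF _ Suc] by auto
  qed
  have "good0 x" using G_B0[OF assms] unfolding B0_def by blast
  hence eq: "orb P Pi x = (\<lambda>j. (P ^^ j) x) ` {..<card (orb P Pi x)}"
    using P.cycle[of x] unfolding good0_def by simp
  show ?thesis
  proof
    fix y assume "y \<in> orb P Pi x"
    with eq obtain j where "y = (P ^^ j) x" by auto
    thus "y \<in> orb T Ti x" using * by simp
  qed
qed

lemma G_P: "x \<in> G \<Longrightarrow> y \<in> orb P Pi x \<Longrightarrow> y \<in> G"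
  using G_Pcyc G_orb by blast

lemma TD_G: "x \<in> G \<Longrightarrow> TD x \<in> G"
  using TD_orb G_orb by blast

lemma U_orbT: assumes "x \<in> G" shows "U x \<in> orb T Ti x"
proof -
  have "P x \<in> orb T Ti x" using G_P1[OF assms] .
  moreover have "TD (P x) \<in> orb T Ti (P x)" by (rule TD_orb)
  ultimately show ?thesis using T.orb_trans by auto
qed

lemma U_G: "x \<in> G \<Longrightarrow> U x \<in> G"
  using U_orbT G_orb by blast

lemma ret_of_G: "x \<in> G \<Longrightarrow> x \<in> D \<Longrightarrow> \<exists>n\<ge>1. (T ^^ n) x \<in> D"
  using G_B0 unfolding B0_def by blast

lemma TD_ret: assumes "x \<in> G" "x \<in> D"
  shows "TD x = (T ^^ return_time T D x) x" "1 \<le> return_time T D x"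
    "\<And>j. 1 \<le> j \<Longrightarrow> j < return_time T D x \<Longrightarrow> (T ^^ j) x \<notin> D"
    "\<And>n. 1 \<le> n \<Longrightarrow> (T ^^ n) x \<in> D \<Longrightarrow> return_time T D x \<le> n"
proof -
  obtain n where n: "n \<ge> 1" "(T ^^ n) x \<in> D" using ret_of_G[OF assms] by blast
  show "TD x = (T ^^ return_time T D x) x" using n assms(2) unfolding first_return_def by auto
  show "1 \<le> return_time T D x" using return_time_props(1)[OF assms(2) n] .
  show "\<And>j. 1 \<le> j \<Longrightarrow> j < return_time T D x \<Longrightarrow> (T ^^ j) x \<notin> D"
    using return_time_props(4)[OF assms(2) n] by blast
  show "\<And>n. 1 \<le> n \<Longrightarrow> (T ^^ n) x \<in> D \<Longrightarrow> return_time T D x \<le> n"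
    using return_time_props(3)[OF assms(2)] by blast
qed

lemma TD_inj: assumes "a \<in> G" "b \<in> G" "TD a = TD b" shows "a = b"
proof (cases "a \<in> D")
  case False
  hence "TD a \<notin> D" using TD_notD by simp
  hence "b \<notin> D" using assms(3) first_return_D by metis
  thus ?thesis using False assms(3) TD_notD by simp
next
  case aD: True
  hence "TD a \<in> D" using first_return_D by metis
  hence bD: "b \<in> D" using assms(3) TD_notD by metis
  define r where "r = return_time T D a"
  define s where "s = return_time T D b"
  note ra = TD_ret[OF assms(1) aD, folded r_def]
  note sb = TD_ret[OF assms(2) bD, folded s_def]
  have eq: "(T ^^ r) a = (T ^^ s) b" using ra(1) sb(1) assms(3) by simp
  have gen: "False" if "x \<in> G" "y \<in> G" "x \<in> D" "y \<in> D" "r' < s'" "(T ^^ r') x = (T ^^ s') y"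
    "\<And>j. 1 \<le> j \<Longrightarrow> j < s' \<Longrightarrow> (T ^^ j) y \<notin> D" "1 \<le> r'" for x y r' s'
  proof -
    have "(T ^^ (r' + (s' - r'))) y = (T ^^ r') ((T ^^ (s' - r')) y)"
      by (simp only: funpow_add comp_apply)
    hence "(T ^^ r') ((T ^^ (s' - r')) y) = (T ^^ r') x" using that(5,6) by simp
    hence "(T ^^ (s' - r')) y = x" using T.fpow_inj by blast
    moreover have "1 \<le> s' - r'" "s' - r' < s'" using that(5,8) by linarith+
    ultimately show False using that(3,7) by metis
  qed
  show ?thesis
  proof (cases r s rule: linorder_cases)
    case less
    thus ?thesis using gen[OF assms(1,2) aD bD less eq sb(3) ra(2)] by blast
  next
    case greater
    thus ?thesis using gen[OF assms(2,1) bD aD greater eq[symmetric] ra(3) sb(2)] by blast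
  next
    case equal
    thus ?thesis using eq T.fpow_inj by blast
  qed
qed


lemma preG: assumes "U z \<in> G" shows "z \<in> G"
proof -
  have PzG: "P z \<in> G"
  proof (cases "P z \<in> D \<and> (\<exists>n\<ge>1. (T ^^ n) (P z) \<in> D)")
    case True
    define r where "r = return_time T D (P z)"
    have "TD (P z) = (T ^^ r) (P z)" using True unfolding first_return_def r_def by simp
    hence "(Ti ^^ r) (TD (P z)) = P z" using T.gf_pow by simp
    moreover have "(Ti ^^ r) (TD (P z)) \<in> orb T Ti (TD (P z))" by (rule orb_gpow)
    moreover have "TD (P z) \<in> G" using assms by simp
    ultimately show ?thesis using G_orb by metis
  next
    case False
    hence "TD (P z) = P z" unfolding first_return_def by auto
    thus ?thesis using assms by simp
  qed
  have "z = (Pi ^^ 1) (P z)" using P.gf by simp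
  moreover have "(Pi ^^ 1) (P z) \<in> orb P Pi (P z)" by (rule orb_gpow)
  ultimately show ?thesis using G_P[OF PzG] by metis
qed

lemma pre_ex: assumes "y \<in> G" shows "\<exists>z. U z = y"
proof (cases "y \<in> D")
  case False
  have "U (Pi y) = TD y" using P.fg by simp
  thus ?thesis using False TD_notD by metis
next
  case True
  have ex: "\<exists>n. n \<ge> 1 \<and> (Ti ^^ n) y \<in> D" using G_B0[OF assms] True unfolding B0_def by blast
  define n0 where "n0 = (LEAST n. n \<ge> 1 \<and> (Ti ^^ n) y \<in> D)"
  have n0: "n0 \<ge> 1" "(Ti ^^ n0) y \<in> D" using LeastI_ex[OF ex] unfolding n0_def by blast+
  have n0min: "\<not> (m \<ge> 1 \<and> (Ti ^^ m) y \<in> D)" if "m < n0" for m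
    using not_less_Least[of m "\<lambda>n. n \<ge> 1 \<and> (Ti ^^ n) y \<in> D"] that unfolding n0_def by blast
  define w where "w = (Ti ^^ n0) y"
  have wD: "w \<in> D" using n0 w_def by simp
  have Tw: "(T ^^ j) w = (Ti ^^ (n0 - j)) y" if "j \<le> n0" for j
  proof -
    have "(Ti ^^ (j + (n0 - j))) y = (Ti ^^ j) ((Ti ^^ (n0 - j)) y)"
      by (simp only: funpow_add comp_apply)
    hence "w = (Ti ^^ j) ((Ti ^^ (n0 - j)) y)" using that unfolding w_def by simp
    thus ?thesis using T.fg_pow by simp
  qed
  have Tn0: "(T ^^ n0) w = y" using Tw[of n0] by simp
  have yD: "(T ^^ n0) w \<in> D" using Tn0 True by simp
  define r where "r = return_time T D w"
  have r: "1 \<le> r" "(T ^^ r) w \<in> D" "r \<le> n0"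
    using return_time_props(1-3)[OF wD n0(1) yD] unfolding r_def by auto
  have "r = n0"
  proof (rule ccontr)
    assume "r \<noteq> n0" hence "r < n0" using r by simp
    hence "(Ti ^^ (n0 - r)) y \<in> D" using Tw[of r] r by simp
    moreover have "n0 - r < n0" "1 \<le> n0 - r" using r \<open>r < n0\<close> by linarith+
    ultimately show False using n0min by blast
  qed
  have cond: "w \<in> D \<and> (\<exists>n\<ge>1. (T ^^ n) w \<in> D)" using wD n0(1) yD by blast
  have "TD w = (T ^^ return_time T D w) w" unfolding first_return_def by (rule if_P[OF cond])
  hence "TD w = y" using Tn0 \<open>r = n0\<close> unfolding r_def by simp
  hence "U (Pi w) = y" using P.fg by simp
  thus ?thesis by blast
qed

lemma pre_uniq: assumes "y \<in> G" "U z = y" "U z' = y" shows "z = z'"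
proof -
  have "U z \<in> G" using assms(1,2) by (simp only:)
  hence zG: "z \<in> G" by (rule preG)
  have "U z' \<in> G" using assms(1,3) by (simp only:)
  hence zG': "z' \<in> G" by (rule preG)
  have a: "P z \<in> G" by (rule G_orb[OF zG G_P1[OF zG]])
  have b: "P z' \<in> G" by (rule G_orb[OF zG' G_P1[OF zG']])
  have "TD (P z) = TD (P z')" using assms(2,3) by simp
  hence "P z = P z'" by (rule TD_inj[OF a b])
  hence "Pi (P z) = Pi (P z')" by (rule arg_cong)
  thus ?thesis using P.gf[of z] P.gf[of z'] by simp
qed

lemma Ui_eq: assumes "y \<in> G" "U z = y" shows "Ui y = z"
  unfolding the_inv_into_def
proof (rule the_equality)
  show "z \<in> UNIV \<and> U z = y" by (rule conjI[OF UNIV_I assms(2)])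
  fix x assume "x \<in> UNIV \<and> U x = y"
  hence "U x = y" by (rule conjunct2)
  thus "x = z" by (rule pre_uniq[OF assms(1) _ assms(2)])
qed

lemma Uinv: "inv_on G U Ui"
proof
  fix x assume x: "x \<in> G"
  show "U x \<in> G" using U_G[OF x] .
  obtain z where z: "U z = x" using pre_ex[OF x] by blast
  have Uz: "Ui x = z" by (rule Ui_eq[OF x z])
  have "U z \<in> G" using x z by (simp only:)
  hence "z \<in> G" by (rule preG)
  thus "Ui x \<in> G" using Uz by (simp only:)
  show "U (Ui x) = x" using z Uz by (simp only:)
  show "Ui (U x) = x" by (rule Ui_eq[OF U_G[OF x] refl])
qed

lemma subA: assumes "w \<in> G"
  shows "\<exists>d. d \<in> D \<and> d \<in> G \<and> d \<in> orb U Ui w \<and> d \<in> orb P Pi w"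
proof -
  interpret U: inv_on G U Ui by (rule Uinv)
  have g: "good0 w" using G_B0[OF assms] unfolding B0_def by blast
  then obtain d where d: "orb P Pi w \<inter> D = {d}" unfolding good0_def by (metis card_1_singletonE)
  hence dD: "d \<in> D" and dw: "d \<in> orb P Pi w" by auto
  have dG: "d \<in> G" using G_P[OF assms dw] .
  have gd: "good0 d" using G_B0[OF dG] unfolding B0_def by blast
  have "w \<in> orb P Pi d" using P.orb_sym[OF _ dw] by simp
  then obtain j where j: "j < card (orb P Pi d)" "w = (P ^^ j) d"
    using cyc(3)[OF dD gd] by auto
  hence "w = (U ^^ j) d" using cyc(5)[OF dD gd] by simp
  hence "w \<in> orb U Ui d" using orb_fpow by metis
  hence "d \<in> orb U Ui w" using U.orb_sym[OF dG] by blast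
  thus ?thesis using dD dG dw by blast
qed

lemma subB: "d \<in> D \<Longrightarrow> d \<in> G \<Longrightarrow> (T ^^ n) d \<in> D \<Longrightarrow> (T ^^ n) d \<in> orb U Ui d"
proof (induction n arbitrary: d rule: less_induct)
  case (less n)
  interpret U: inv_on G U Ui by (rule Uinv)
  show ?case
  proof (cases "n = 0")
    case True then show ?thesis using orb_self by simp
  next
    case False
    hence n1: "1 \<le> n" by simp
    define r where "r = return_time T D d"
    note rt = TD_ret[OF less.prems(2,1), folded r_def]
    have rn: "r \<le> n" using rt(4)[OF n1 less.prems(3)] .
    have TDd: "TD d \<in> D" "TD d \<in> G" using first_return_D less.prems TD_G by auto
    have "(T ^^ ((n - r) + r)) d = (T ^^ (n - r)) ((T ^^ r) d)" by (simp only: funpow_add comp_apply)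
    hence eq: "(T ^^ n) d = (T ^^ (n - r)) (TD d)" using rn rt(1) by simp
    have lt: "n - r < n" using rt(2) n1 by linarith
    have inD: "(T ^^ (n - r)) (TD d) \<in> D" using eq less.prems(3) by metis
    have "(T ^^ (n - r)) (TD d) \<in> orb U Ui (TD d)"
      using less.IH[OF lt TDd inD] .
    moreover have "TD d \<in> orb U Ui d"
    proof -
      have gd: "good0 d" using G_B0[OF less.prems(2)] unfolding B0_def by blast
      show ?thesis using cyc(6)[OF less.prems(1) gd] orb_fpow by metis
    qed
    ultimately have "(T ^^ (n - r)) (TD d) \<in> orb U Ui d" using U.orb_trans[OF less.prems(2)] by blast
    thus ?thesis by (simp only: eq)
  qed
qed

lemma key: assumes "y \<in> G" shows "T y \<in> orb U Ui y"
proof -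
  interpret U: inv_on G U Ui by (rule Uinv)
  have TyG: "T y \<in> G" using G_T[OF assms] .
  obtain d where d: "d \<in> D" "d \<in> G" "d \<in> orb U Ui y" "d \<in> orb P Pi y" using subA[OF assms] by blast
  obtain d' where d': "d' \<in> D" "d' \<in> G" "d' \<in> orb U Ui (T y)" "d' \<in> orb P Pi (T y)"
    using subA[OF TyG] by blast
  have Ty: "T y \<in> orb T Ti y" using orb_fpow[where f=T and g=Ti and n=1 and x=y] by simp
  have s1: "d' \<in> orb T Ti (T y)" using G_Pcyc[OF TyG] d'(4) by (rule subsetD)
  have s2: "orb T Ti (T y) \<subseteq> orb T Ti y" by (rule T.orb_trans[OF UNIV_I Ty])
  have dy: "d' \<in> orb T Ti y" using s1 s2 by (rule rev_subsetD)
  have s3: "d \<in> orb T Ti y" using G_Pcyc[OF assms] d(4) by (rule subsetD)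
  have yd: "y \<in> orb T Ti d" by (rule T.orb_sym[OF UNIV_I s3])
  have s4: "orb T Ti y \<subseteq> orb T Ti d" by (rule T.orb_trans[OF UNIV_I yd])
  have "d' \<in> orb T Ti d" using dy s4 by (rule rev_subsetD)
  then consider n where "d' = (T ^^ n) d" | n where "d' = (Ti ^^ n) d" unfolding orb_def by blast
  hence dd: "d' \<in> orb U Ui d"
  proof cases
    case 1
    hence inD: "(T ^^ n) d \<in> D" using d'(1) by metis
    have "(T ^^ n) d \<in> orb U Ui d" by (rule subB[OF d(1,2) inD])
    thus ?thesis using 1 by metis
  next
    case 2
    hence e: "d = (T ^^ n) d'" using T.fg_pow by simp
    hence inD: "(T ^^ n) d' \<in> D" using d(1) by metis
    have "(T ^^ n) d' \<in> orb U Ui d'" by (rule subB[OF d'(1,2) inD])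
    hence "d \<in> orb U Ui d'" using e by metis
    thus ?thesis by (rule U.orb_sym[OF d'(2)])
  qed
  have t1: "T y \<in> orb U Ui d'" using U.orb_sym[OF TyG d'(3)] .
  have t2: "orb U Ui d' \<subseteq> orb U Ui d" by (rule U.orb_trans[OF d(2) dd])
  have t3: "orb U Ui d \<subseteq> orb U Ui y" by (rule U.orb_trans[OF assms d(3)])
  show ?thesis using t1 t2 t3 by blast
qed

lemma final: assumes "x \<in> G" shows "orb T Ti x = orb U Ui x"
proof (rule equalityI)
  interpret U: inv_on G U Ui by (rule Uinv)
  have sx: "orb U Ui x \<subseteq> orb U Ui x \<inter> G" using U.orb_G[OF assms] by blast
  have "orb T Ti x \<subseteq> orb U Ui x \<inter> G"
  proof (rule orb_min)
    show "x \<in> orb U Ui x \<inter> G" using orb_self[of x U Ui] assms by blast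
    fix y assume y: "y \<in> orb U Ui x \<inter> G"
    hence yG: "y \<in> G" and yx: "y \<in> orb U Ui x" by auto
    have tr: "orb U Ui y \<subseteq> orb U Ui x" by (rule U.orb_trans[OF assms yx])
    have "T y \<in> orb U Ui x" using key[OF yG] tr by (rule rev_subsetD)
    thus "T y \<in> orb U Ui x \<inter> G" by (rule subsetD[OF sx])
    have TiG: "Ti y \<in> G" using G_Ti[OF yG] .
    have "T (Ti y) = y" using T.fg by simp
    hence "y \<in> orb U Ui (Ti y)" using key[OF TiG] by simp
    hence "Ti y \<in> orb U Ui y" by (rule U.orb_sym[OF TiG])
    hence "Ti y \<in> orb U Ui x" using tr by (rule rev_subsetD)
    thus "Ti y \<in> orb U Ui x \<inter> G" by (rule subsetD[OF sx])
  qed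
  thus "orb T Ti x \<subseteq> orb U Ui x" by blast
  show "orb U Ui x \<subseteq> orb T Ti x"
  proof (rule orb_min)
    show "x \<in> orb T Ti x" by (rule orb_self)
    fix y assume y: "y \<in> orb T Ti x"
    have yG: "y \<in> G" using G_orb[OF assms y] .
    have tr: "orb T Ti y \<subseteq> orb T Ti x" by (rule T.orb_trans[OF UNIV_I y])
    show "U y \<in> orb T Ti x" using U_orbT[OF yG] tr by (rule rev_subsetD)
    have UiG: "Ui y \<in> G" using U.gG[OF yG] .
    have "U (Ui y) \<in> orb T Ti (Ui y)" by (rule U_orbT[OF UiG])
    hence "y \<in> orb T Ti (Ui y)" using U.fg[OF yG] by metis
    hence "Ui y \<in> orb T Ti y" by (rule T.orb_sym[OF UNIV_I])
    thus "Ui y \<in> orb T Ti x" using tr by (rule rev_subsetD)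
  qed
qed

end



theorem mainTheorem20:
  fixes M :: "'a::polish_space measure" and T P :: "'a \<Rightarrow> 'a" and D :: "'a set"
  assumes "sets M = sets borel" and "prob_space M" and "atomless M"
    and "aut M T" and "aut M P" and "periodic M P" and "fundamental_domain M P D"
  defines "U \<equiv> first_return T D \<circ> P"
  shows "(AE x in M. first_return U D x = first_return T D x) \<and>
         (AE x in M. x \<in> D \<longrightarrow>
            (\<exists>n\<ge>1. (U ^^ n) x \<in> D) \<and> return_time U D x = card (aut_orbit M P x)) \<and>
         (P \<in> full_group M T \<longrightarrow> same_orbits M T U)"
proof -
  have sp: "space M = UNIV" using sets_eq_imp_space_eq[OF assms(1)] by simp
  have orbeq: "aut_orbit M V x = orb V (the_inv_into UNIV V) x" for V x
    using aut_orbit_orb[of M V x] sp by simp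
  define Ti where "Ti = the_inv_into UNIV T"
  define Pi where "Pi = the_inv_into UNIV P"
  have invs: "inv_on UNIV V (the_inv_into UNIV V)" and mp: "mpres M V" "mpres M (the_inv_into UNIV V)"
    if a: "aut M V" for V
  proof -
    have bij: "bij_betw V UNIV UNIV" and Vm: "V \<in> measurable M M"
      and Vim: "the_inv_into UNIV V \<in> measurable M M" and dV: "distr M M V = M"
    proof -
      have a': "bij_betw V (space M) (space M) \<and> V \<in> measurable M M \<and>
        the_inv_into (space M) V \<in> measurable M M \<and> distr M M V = M"
        using a unfolding aut_def .
      thus "bij_betw V UNIV UNIV" "V \<in> measurable M M" "the_inv_into UNIV V \<in> measurable M M"
        "distr M M V = M" unfolding sp by blast+
    qed
    have inj: "inj V" by (rule bij_betw_imp_inj_on[OF bij])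
    have surj: "surj V" by (rule bij_betw_imp_surj[OF bij])
    have gf: "the_inv_into UNIV V (V x) = x" for x using the_inv_into_f_f[OF inj UNIV_I] .
    have fg: "V (the_inv_into UNIV V x) = x" for x
      by (rule f_the_inv_into_f[OF inj]) (simp add: surj)
    show "inv_on UNIV V (the_inv_into UNIV V)" by unfold_locales (auto simp: gf fg)
    have e: "emeasure M (V -` A \<inter> space M) = emeasure M A" if "A \<in> sets M" for A
    proof -
      have "emeasure M A = emeasure (distr M M V) A" using dV by simp
      also have "\<dots> = emeasure M (V -` A \<inter> space M)" by (rule emeasure_distr[OF Vm that])
      finally show ?thesis by simp
    qed
    show "mpres M V" unfolding mpres_def using Vm e by blast
    have "emeasure M (the_inv_into UNIV V -` A \<inter> space M) = emeasure M A" if A: "A \<in> sets M" for A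
    proof -
      have m: "the_inv_into UNIV V -` A \<inter> space M \<in> sets M" by (rule measurable_sets[OF Vim A])
      have "V -` (the_inv_into UNIV V -` A \<inter> space M) \<inter> space M = A"
        using sp gf by auto
      thus ?thesis using e[OF m] by simp
    qed
    thus "mpres M (the_inv_into UNIV V)" unfolding mpres_def using Vim by blast
  qed
  interpret S: setting T Ti P Pi D
    unfolding setting_def Ti_def Pi_def using invs[OF assms(4)] invs[OF assms(5)] by blast
  have AEg0: "AE x in M. S.good0 x"
  proof -
    have "AE x in M. finite (aut_orbit M P x)" using assms(6) unfolding periodic_def .
    moreover have "AE x in M. card (aut_orbit M P x \<inter> D) = 1"
      using assms(7) unfolding fundamental_domain_def by blast
    ultimately show ?thesis unfolding S.good0_def by eventually_elim (simp add: orbeq Pi_def)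
  qed
  have p1: "AE x in M. first_return U D x = first_return T D x"
    using AEg0 by eventually_elim (simp add: U_def S.part12(1))
  have p2: "AE x in M. x \<in> D \<longrightarrow>
            (\<exists>n\<ge>1. (U ^^ n) x \<in> D) \<and> return_time U D x = card (aut_orbit M P x)"
    using AEg0
  proof eventually_elim
    case (elim x)
    show ?case
    proof
      assume xD: "x \<in> D"
      have "(\<exists>n\<ge>1. (S.U ^^ n) x \<in> D) \<and> return_time S.U D x = card (orb P Pi x)"
        by (rule S.part12(2)[OF elim xD])
      thus "(\<exists>n\<ge>1. (U ^^ n) x \<in> D) \<and> return_time U D x = card (aut_orbit M P x)"
        unfolding U_def orbeq Pi_def .
    qed
  qed
  have p3: "same_orbits M T U" if fg: "P \<in> full_group M T"
  proof -
    have Dm: "D \<in> sets M" using assms(7) unfolding fundamental_domain_def by blast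
    have a1: "AE x in M. P x \<in> orb T Ti x" using fg unfolding full_group_def orbeq Ti_def by blast
    have a2: "AE x in M. x \<in> D \<longrightarrow> (\<exists>n\<ge>1. (T ^^ n) x \<in> D)"
      by (rule poincare[OF mp(1)[OF assms(4)] sp assms(2) Dm])
    have a3: "AE x in M. x \<in> D \<longrightarrow> (\<exists>n\<ge>1. (Ti ^^ n) x \<in> D)"
      unfolding Ti_def by (rule poincare[OF mp(2)[OF assms(4)] sp assms(2) Dm])
    have B: "AE x in M. S.B0 x" using AEg0 a1 a2 a3 unfolding S.B0_def by eventually_elim blast
    have b1: "AE x in M. \<forall>n. S.B0 ((T ^^ n) x)" by (rule mpres_AE_pow[OF mp(1)[OF assms(4)] sp B])
    have b2: "AE x in M. \<forall>n. S.B0 ((Ti ^^ n) x)"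
      unfolding Ti_def by (rule mpres_AE_pow[OF mp(2)[OF assms(4)] sp B[unfolded Ti_def]])
    have G: "AE x in M. x \<in> S.G" using b1 b2
      by eventually_elim (auto simp: S.G_def orb_def)
    have fin: "orb T Ti x = orb U (the_inv_into UNIV U) x" if "x \<in> S.G" for x
      using S.final[OF that] unfolding U_def .
    have fin2: "aut_orbit M T x = aut_orbit M U x" if "x \<in> S.G" for x
      using fin[OF that] by (simp add: orbeq Ti_def)
    show ?thesis unfolding same_orbits_def using G
      by eventually_elim (rule fin2)
  qed
  show ?thesis using p1 p2 p3 by blast
qed


end
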